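(* For every bipartition $(\mathbf L,\mathbf R)$ of a finite set $\mathbf A\subset\mathbb{N}^*$, there exists an elementary interval bipartition $(\mathbf L',\mathbf R')$ such that $\boldsymbol\lambda(\mathbf L,\mathbf R)=\boldsymbol\lambda(\mathbf L',\mathbf R')$.
   Context: A bipartition of $\mathbf A$ is an ordered pair $(\mathbf L,\mathbf R)$ with $\mathbf L\cup\mathbf R=\mathbf A$, $\mathbf L\cap\mathbf R=\varnothing$. An interval bipartition is a bipartition of an interval $\{i,i+1,\dots,j\}$ of $\mathbb{N}^*$ (or of $\varnothing$); it is elementary if either $\mathbf L=\mathbf R=\varnothing$, or $1\in\mathbf L$ and $\max(\mathbf L\cup\mathbf R)\in\mathbf R$. For a bipartition $(\mathbf L,\mathbf R)$ of a finite set with $\mathbf L=\{\ell_1<\dots<\ell_p\}$ nonempty, $\boldsymbol\lambda(\mathbf L,\mathbf R)$ is the integer partition with parts $\boldsymbol\lambda(\mathbf L,\mathbf R)_i=\#\{r\in\mathbf R:\ell_i<r\}$, $i=1,\dots,p$ (zero parts discarded); if $\mathbf L=\varnothing$, $\boldsymbol\lambda(\mathbf L,\mathbf R)=(0)$. *)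

theory Defs
  imports Main
begin

definition bipartition :: "nat set \<Rightarrow> nat set \<Rightarrow> nat set \<Rightarrow> bool" where
  "bipartition A L R \<longleftrightarrow> L \<union> R = A \<and> L \<inter> R = {}"

text \<open>Interval bipartition: a bipartition of an interval {i..j} of positive integers
  (or of the empty set, which is {i..j} for i > j).\<close>
definition interval_bipartition :: "nat set \<Rightarrow> nat set \<Rightarrow> bool" where
  "interval_bipartition L R \<longleftrightarrow> (\<exists>i j. 1 \<le> i \<and> bipartition {i..j} L R)"

definition elementary_interval_bipartition :: "nat set \<Rightarrow> nat set \<Rightarrow> bool" where
  "elementary_interval_bipartition L R \<longleftrightarrow>
     interval_bipartition L R \<and>
     ((L = {} \<and> R = {}) \<or> (1 \<in> L \<and> Max (L \<union> R) \<in> R))"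

text \<open>The integer partition lambda(L, R), represented as the (nonincreasing) list of its
  nonzero parts: the i-th part is the number of r in R with l_i < r, where
  l_1 < ... < l_p enumerate L; zero parts are discarded. The partition (0) (case L = {})
  is the empty partition, represented by the empty list.\<close>
definition lam :: "nat set \<Rightarrow> nat set \<Rightarrow> nat list" where
  "lam L R = filter (\<lambda>k. 0 < k) (map (\<lambda>l. card {r \<in> R. l < r}) (sorted_list_of_set L))"

end

theory Submission
  imports Defs
begin

lemma sl_eq:
  fixes xs :: "nat list"
  assumes "sorted_wrt (<) xs"
  shows "sorted_list_of_set (set xs) = xs"
proof -
  have "sorted xs" "distinct xs" using assms by (auto simp: strict_sorted_iff)
  then show ?thesis by (simp add: sorted_list_of_set_sort_remdups distinct_remdups_id sorted_sort_id)
qed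

lemma sl_filter:
  fixes S :: "nat set"
  assumes "finite S"
  shows "sorted_list_of_set {x\<in>S. P x} = filter P (sorted_list_of_set S)"
proof -
  have "set (filter P (sorted_list_of_set S)) = {x\<in>S. P x}" using assms by auto
  moreover have "sorted_wrt (<) (filter P (sorted_list_of_set S))"
    using sorted_wrt_filter sorted_list_of_set.strict_sorted_key_list_of_set by blast
  ultimately show ?thesis using sl_eq by metis
qed

lemma sl_image:
  fixes S :: "nat set" and f :: "nat \<Rightarrow> nat"
  assumes "finite S" "strict_mono_on S f"
  shows "sorted_list_of_set (f ` S) = map f (sorted_list_of_set S)"
proof -
  have "set (map f (sorted_list_of_set S)) = f ` S" using assms by auto
  moreover have "sorted_wrt (<) (map f (sorted_list_of_set S))"
    unfolding sorted_wrt_map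
    using sorted_list_of_set.strict_sorted_key_list_of_set[of S]
    by (rule sorted_wrt_mono_rel[rotated]) (use assms in \<open>auto simp: strict_mono_on_def\<close>)
  ultimately show ?thesis using sl_eq by metis
qed

theorem lemma3p10:
  fixes A L R :: "nat set"
  assumes "finite A" and "0 \<notin> A" and "bipartition A L R"
  shows "\<exists>L' R'. elementary_interval_bipartition L' R' \<and> lam L R = lam L' R'"
proof -
  have fL: "finite L" and fR: "finite R" and disj: "L \<inter> R = {}"
    using assms(1,3) by (auto simp: bipartition_def)
  define L1 where "L1 = {l\<in>L. \<exists>r\<in>R. l < r}"
  define R1 where "R1 = {r\<in>R. \<exists>l\<in>L. l < r}"
  have fL1: "finite L1" and fR1: "finite R1" using fL fR by (auto simp: L1_def R1_def)
  have cnt: "\<And>l. l \<in> L1 \<Longrightarrow> {r\<in>R. l < r} = {r\<in>R1. l < r}"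
    by (auto simp: L1_def R1_def)
  have pos: "\<And>l. l \<in> L \<Longrightarrow> (0 < card {r\<in>R. l < r}) = (l \<in> L1)"
    using fR by (auto simp: L1_def card_gt_0_iff)
  have lam1: "lam L R = lam L1 R1"
  proof -
    have "lam L R = map (\<lambda>l. card {r\<in>R. l < r}) (filter (\<lambda>l. 0 < card {r\<in>R. l < r}) (sorted_list_of_set L))"
      unfolding lam_def by (simp add: filter_map comp_def)
    also have "filter (\<lambda>l. 0 < card {r\<in>R. l < r}) (sorted_list_of_set L) = sorted_list_of_set L1"
    proof -
      have "L1 = {l\<in>L. 0 < card {r\<in>R. l < r}}" using pos by (auto simp: L1_def)
      then show ?thesis using sl_filter[OF fL] by simp
    qed
    also have "map (\<lambda>l. card {r\<in>R. l < r}) (sorted_list_of_set L1) = map (\<lambda>l. card {r\<in>R1. l < r}) (sorted_list_of_set L1)"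
      using cnt fL1 by (intro map_cong) auto
    also have "\<dots> = lam L1 R1"
    proof -
      have "\<And>l. l \<in> L1 \<Longrightarrow> 0 < card {r\<in>R1. l < r}"
      proof -
        fix l assume l: "l \<in> L1"
        then have "l \<in> L" by (simp add: L1_def)
        then show "0 < card {r\<in>R1. l < r}" using pos[of l] cnt[OF l] l by simp
      qed
      then show ?thesis unfolding lam_def using fL1
        by (subst filter_True) auto
    qed
    finally show ?thesis .
  qed
  show ?thesis
  proof (cases "L1 = {}")
    case True
    then have "R1 = {}" by (auto simp: L1_def R1_def)
    moreover have "elementary_interval_bipartition {} {}"
      unfolding elementary_interval_bipartition_def interval_bipartition_def bipartition_def
      by (rule conjI, rule exI[of _ 1], rule exI[of _ 0]) auto
    ultimately have "elementary_interval_bipartition {} {} \<and> lam L R = lam {} {}" using lam1 True by simp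
    then show ?thesis
      apply (rule_tac x="{}" in exI)
      apply (rule_tac x="{}" in exI)
      by assumption
  next
    case False
    define A1 where "A1 = L1 \<union> R1"
    define n where "n = card A1"
    define f where "f x = card {y\<in>A1. y \<le> x}" for x
    have fA1: "finite A1" using fL1 fR1 by (simp add: A1_def)
    have d1: "L1 \<inter> R1 = {}" using disj by (auto simp: L1_def R1_def)
    have sm: "strict_mono_on A1 f"
    proof (rule strict_mono_onI)
      fix x y assume "x \<in> A1" "y \<in> A1" "x < y"
      then have "y \<in> {z\<in>A1. z \<le> y}" "y \<notin> {z\<in>A1. z \<le> x}" by auto
      moreover have "{z\<in>A1. z \<le> x} \<subseteq> {z\<in>A1. z \<le> y}" using \<open>x < y\<close> by auto
      ultimately have "{z\<in>A1. z \<le> x} \<subset> {z\<in>A1. z \<le> y}" by blast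
      then show "f x < f y" unfolding f_def by (rule psubset_card_mono[rotated]) (use fA1 in auto)
    qed
    have inj: "inj_on f A1" using sm strict_mono_on_imp_inj_on by blast
    have lt: "\<And>x y. x \<in> A1 \<Longrightarrow> y \<in> A1 \<Longrightarrow> (f x < f y) = (x < y)"
    proof -
      fix x y assume x: "x \<in> A1" and y: "y \<in> A1"
      show "(f x < f y) = (x < y)"
      proof
      show "f x < f y \<Longrightarrow> x < y"
      proof (rule ccontr)
        assume h: "f x < f y" "\<not> x < y"
        then have "y < x \<or> y = x" by auto
        then show False
        proof
          assume "y < x" then have "f y < f x" using strict_mono_onD[OF sm y x] by simp
          then show False using h by simp
        next
          assume "y = x" then show False using h by simp
        qed
      qed
      show "x < y \<Longrightarrow> f x < f y" using strict_mono_onD[OF sm x y] by simp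
      qed
    qed
    have rng: "f ` A1 = {1..n}"
    proof -
      have sub: "f ` A1 \<subseteq> {1..n}"
      proof
        fix z assume "z \<in> f ` A1"
        then obtain x where x: "x \<in> A1" "z = f x" by auto
        have "x \<in> {y\<in>A1. y \<le> x}" using x by auto
        moreover have "finite {y\<in>A1. y \<le> x}" using fA1 by simp
        ultimately have "0 < card {y\<in>A1. y \<le> x}" by (auto simp: card_gt_0_iff)
        then have "1 \<le> f x" unfolding f_def by simp
        moreover have "f x \<le> n" unfolding f_def n_def using fA1 by (intro card_mono) auto
        ultimately show "z \<in> {1..n}" using x by auto
      qed
      moreover have "card (f ` A1) = card {1..n}" using card_image[OF inj] n_def by simp
      ultimately show ?thesis by (simp add: card_subset_eq)
    qed
    define L' where "L' = f ` L1"
    define R' where "R' = f ` R1"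
    have bp: "bipartition {1..n} L' R'"
    proof -
      have "L' \<union> R' = {1..n}" unfolding L'_def R'_def using rng A1_def by (simp add: image_Un[symmetric])
      moreover have "L' \<inter> R' = {}" unfolding L'_def R'_def
        using inj_on_image_Int[OF inj, of L1 R1] d1 A1_def by auto
      ultimately show ?thesis unfolding bipartition_def by simp
    qed
    have mn: "Min A1 \<in> L1"
    proof -
      have ne: "A1 \<noteq> {}" using False A1_def by auto
      have "Min A1 \<in> A1" using Min_in[OF fA1 ne] .
      moreover have "Min A1 \<notin> R1"
      proof
        assume "Min A1 \<in> R1"
        then obtain l where "l \<in> L" "l < Min A1" "Min A1 \<in> R" by (auto simp: R1_def)
        then have "l \<in> L1" by (auto simp: L1_def)
        then have "Min A1 \<le> l" using fA1 A1_def by auto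
        with \<open>l < Min A1\<close> show False by simp
      qed
      ultimately show ?thesis by (auto simp: A1_def)
    qed
    have mx: "Max A1 \<in> R1"
    proof -
      have ne: "A1 \<noteq> {}" using False A1_def by auto
      have "Max A1 \<in> A1" using Max_in[OF fA1 ne] .
      moreover have "Max A1 \<notin> L1"
      proof
        assume "Max A1 \<in> L1"
        then obtain r where "r \<in> R" "Max A1 < r" "Max A1 \<in> L" by (auto simp: L1_def)
        then have "r \<in> R1" by (auto simp: R1_def)
        then have "r \<le> Max A1" using fA1 A1_def by auto
        with \<open>Max A1 < r\<close> show False by simp
      qed
      ultimately show ?thesis by (auto simp: A1_def)
    qed
    have f1: "f (Min A1) = 1"
    proof -
      have "{y\<in>A1. y \<le> Min A1} = {Min A1}" using mn fA1 A1_def by (auto intro: antisym)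
      then show ?thesis by (simp add: f_def)
    qed
    have fn: "f (Max A1) = n"
    proof -
      have "{y\<in>A1. y \<le> Max A1} = A1" using fA1 by auto
      then show ?thesis by (simp add: f_def n_def)
    qed
    have nge: "1 \<le> n" using False fA1 unfolding n_def A1_def
      by (metis One_nat_def Suc_leI card_gt_0_iff sup_eq_bot_iff)
    have U: "L' \<union> R' = {1..n}" using bp by (simp add: bipartition_def)
    have elem: "elementary_interval_bipartition L' R'"
      unfolding elementary_interval_bipartition_def interval_bipartition_def
    proof (intro conjI)
      show "\<exists>i j. 1 \<le> i \<and> bipartition {i..j} L' R'" using bp by blast
      have "f (Min A1) \<in> L'" unfolding L'_def using mn by (rule imageI)
      then have one: "1 \<in> L'" using f1 by simp
      have "Max {1..n} = n" using nge by (intro Max_eqI) auto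
      moreover have "n \<in> R'" using imageI[OF mx, of f] fn unfolding R'_def by simp
      ultimately have "Max (L' \<union> R') \<in> R'" unfolding U by simp
      then show "L' = {} \<and> R' = {} \<or> 1 \<in> L' \<and> Max (L' \<union> R') \<in> R'" using one by blast
    qed
    have "lam L1 R1 = lam L' R'"
    proof -
      have smL: "strict_mono_on L1 f" using sm A1_def by (auto simp: strict_mono_on_def)
      have sl: "sorted_list_of_set L' = map f (sorted_list_of_set L1)"
        unfolding L'_def by (rule sl_image[OF fL1 smL])
      have "\<And>l. l \<in> L1 \<Longrightarrow> card {r\<in>R'. f l < r} = card {r\<in>R1. l < r}"
      proof -
        fix l assume l: "l \<in> L1"
        have "{r\<in>R'. f l < r} = f ` {r\<in>R1. l < r}"
          unfolding R'_def using lt l A1_def by auto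
        moreover have "inj_on f {r\<in>R1. l < r}" using inj A1_def by (auto intro: inj_on_subset)
        ultimately show "card {r\<in>R'. f l < r} = card {r\<in>R1. l < r}" by (simp add: card_image)
      qed
      then have eq: "map (\<lambda>x. card {r \<in> R'. f x < r}) (sorted_list_of_set L1) = map (\<lambda>l. card {r \<in> R1. l < r}) (sorted_list_of_set L1)"
        using fL1 by (intro map_cong) auto
      have "map (\<lambda>l. card {r\<in>R'. l < r}) (sorted_list_of_set L') = map (\<lambda>l. card {r\<in>R1. l < r}) (sorted_list_of_set L1)"
        unfolding sl map_map comp_def by (rule eq)
      then show ?thesis unfolding lam_def by simp
    qed
    then have "elementary_interval_bipartition L' R' \<and> lam L R = lam L' R'" using lam1 elem by simp
    then show ?thesis
      apply (rule_tac x=L' in exI)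
      apply (rule_tac x=R' in exI)
      by assumption
  qed
qed

end
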